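(* Let $L$ be a minimal shift with linear complexity, i.e. $p_L(n)=O(n)$. Then $SP_L$ is finite.
   Context: $A$ is a finite alphabet, and $\sigma$ deletes the first letter. A shift is a closed $L\subseteq A^{\mathbb N}$ with $\sigma(L)\subseteq L$. It is minimal if it contains no nonempty proper closed $\sigma$-invariant subset. $p_L(n)$ is the number of length-$n$ factors of words of $L$. A factor $u$ is left special if $bu$ is a factor for at least two letters $b\in A$. $SP_L$ is the set of infinite words all of whose prefixes are left special factors of $L$. *)

theory Defs
  imports Main "HOL-Library.Landau_Symbols"
begin

text \<open>One-sided infinite words over a finite alphabet 'a are functions nat => 'a.
  The alphabet A is the (finite) type 'a.\<close>

definition shift_map :: "(nat \<Rightarrow> 'a) \<Rightarrow> (nat \<Rightarrow> 'a)" where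
  "shift_map x = (\<lambda>n. x (Suc n))"

definition pref :: "(nat \<Rightarrow> 'a) \<Rightarrow> nat \<Rightarrow> 'a list" where
  "pref x n = map x [0..<n]"

text \<open>Closedness in the product topology of the discrete finite alphabet:
  a word belongs to L as soon as each of its prefixes is a prefix of some word of L.\<close>
definition word_closed :: "(nat \<Rightarrow> 'a) set \<Rightarrow> bool" where
  "word_closed L \<longleftrightarrow> (\<forall>x. (\<forall>n. \<exists>y\<in>L. pref y n = pref x n) \<longrightarrow> x \<in> L)"

definition is_shift :: "(nat \<Rightarrow> 'a) set \<Rightarrow> bool" where
  "is_shift L \<longleftrightarrow> word_closed L \<and> shift_map ` L \<subseteq> L"

definition minimal_shift :: "(nat \<Rightarrow> 'a) set \<Rightarrow> bool" where
  "minimal_shift L \<longleftrightarrow> is_shift L \<and>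
     (\<forall>M. M \<subseteq> L \<and> M \<noteq> {} \<and> is_shift M \<longrightarrow> M = L)"

definition factors :: "(nat \<Rightarrow> 'a) set \<Rightarrow> 'a list set" where
  "factors L = {u. \<exists>x\<in>L. \<exists>i. u = map (\<lambda>j. x (i + j)) [0..<length u]}"

definition complexity :: "(nat \<Rightarrow> 'a) set \<Rightarrow> nat \<Rightarrow> nat" where
  "complexity L n = card {u \<in> factors L. length u = n}"

definition left_special :: "(nat \<Rightarrow> 'a) set \<Rightarrow> 'a list \<Rightarrow> bool" where
  "left_special L u \<longleftrightarrow> u \<in> factors L \<and> (\<exists>a b. a \<noteq> b \<and> a # u \<in> factors L \<and> b # u \<in> factors L)"

definition SP :: "(nat \<Rightarrow> 'a) set \<Rightarrow> (nat \<Rightarrow> 'a) set" where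
  "SP L = {x. \<forall>n. left_special L (pref x n)}"

end

theory Submission
  imports Defs
begin

lemma factors_iff:
  "u \<in> factors L \<longleftrightarrow> (\<exists>x\<in>L. \<exists>i. \<forall>j<length u. u!j = x (i+j))"
proof
  assume "u \<in> factors L"
  then show "\<exists>x\<in>L. \<exists>i. \<forall>j<length u. u!j = x (i+j)"
  proof -
    obtain x i where x: "x \<in> L" and eq: "u = map (\<lambda>j. x (i + j)) [0..<length u]"
      using \<open>u \<in> factors L\<close> unfolding factors_def by blast
    have "\<forall>j<length u. u!j = x (i+j)"
    proof (intro allI impI)
      fix j assume j: "j < length u"
      have "u ! j = map (\<lambda>j. x (i + j)) [0..<length u] ! j" using arg_cong[OF eq, of "\<lambda>v. v ! j"] .
      then show "u!j = x (i+j)" using j by simp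
    qed
    then show ?thesis using x by blast
  qed
next
  assume "\<exists>x\<in>L. \<exists>i. \<forall>j<length u. u!j = x (i+j)"
  then obtain x i where "x \<in> L" "\<forall>j<length u. u!j = x (i+j)" by blast
  then have "u = map (\<lambda>j. x (i + j)) [0..<length u]"
    by (intro nth_equalityI) auto
  with \<open>x \<in> L\<close> show "u \<in> factors L" unfolding factors_def by blast
qed

lemma pref_nth: "k < n \<Longrightarrow> pref x n ! k = x k"
  unfolding pref_def by simp

lemma pref_eqD: "pref y n = pref x n \<Longrightarrow> k < n \<Longrightarrow> y k = x k"
  by (metis pref_nth)

lemma length_pref[simp]: "length (pref x n) = n"
  unfolding pref_def by simp

lemma tl_factor: "w \<in> factors L \<Longrightarrow> tl w \<in> factors L"
proof -
  assume "w \<in> factors L"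
  then obtain x i where "x \<in> L" "\<forall>j<length w. w!j = x (i+j)" by (auto simp: factors_iff)
  then have "\<forall>j<length (tl w). tl w ! j = x (Suc i + j)"
    by (simp add: nth_tl)
  then have "\<exists>i'. \<forall>j<length (tl w). tl w ! j = x (i' + j)" by (metis add_Suc)
  with \<open>x \<in> L\<close> show ?thesis unfolding factors_iff by blast
qed

lemma left_ext:
  assumes ms: "minimal_shift L" and u: "u \<in> factors L"
  shows "\<exists>a. a # u \<in> factors L"
proof -
  define occ where "occ x \<longleftrightarrow> (\<exists>i. \<forall>j<length u. u!j = x (i+j))" for x
  define M where "M = {x\<in>L. \<not> occ x}"
  have shL: "is_shift L" and mn: "\<And>M. M \<subseteq> L \<Longrightarrow> M \<noteq> {} \<Longrightarrow> is_shift M \<Longrightarrow> M = L"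
    using ms unfolding minimal_shift_def by auto
  have wcL: "word_closed L" and shl: "shift_map ` L \<subseteq> L" using shL unfolding is_shift_def by auto
  have "is_shift M"
    unfolding is_shift_def
  proof
    show "word_closed M"
      unfolding word_closed_def
    proof (intro allI impI)
      fix x assume H: "\<forall>n. \<exists>y\<in>M. pref y n = pref x n"
      then have "x \<in> L" using wcL unfolding word_closed_def M_def by blast
      moreover have "\<not> occ x"
      proof
        assume "occ x"
        then obtain i where i: "\<forall>j<length u. u!j = x (i+j)" unfolding occ_def by blast
        obtain y where y: "y \<in> M" "pref y (i + length u) = pref x (i + length u)" using H by blast
        have "\<forall>j<length u. u!j = y (i+j)" using i pref_eqD[OF y(2)] by simp
        then have "occ y" unfolding occ_def by blast
        with y(1) show False unfolding M_def by blast
      qed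
      ultimately show "x \<in> M" unfolding M_def by blast
    qed
  next
    show "shift_map ` M \<subseteq> M"
    proof
      fix z assume "z \<in> shift_map ` M"
      then obtain y where y: "y \<in> M" "z = shift_map y" by blast
      then have "z \<in> L" using shl unfolding M_def by blast
      moreover have "\<not> occ z"
      proof
        assume "occ z"
        then obtain i where "\<forall>j<length u. u!j = z (i+j)" unfolding occ_def by blast
        then have "\<forall>j<length u. u!j = y (Suc i+j)" using y(2) by (simp add: shift_map_def)
        then have "occ y" unfolding occ_def by blast
        with y(1) show False unfolding M_def by blast
      qed
      ultimately show "z \<in> M" unfolding M_def by blast
    qed
  qed
  obtain x0 where x0: "x0 \<in> L" "occ x0" using u unfolding factors_iff occ_def by blast
  have "M \<noteq> L" using x0 unfolding M_def by blast
  then have "M = {}" using mn[OF _ _ \<open>is_shift M\<close>] unfolding M_def by blast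
  have "shift_map x0 \<in> L" using shl x0 by blast
  then have "occ (shift_map x0)" using \<open>M = {}\<close> unfolding M_def by blast
  then obtain i where i: "\<forall>j<length u. u!j = x0 (Suc i+j)" unfolding occ_def shift_map_def by auto
  have "\<forall>j<length (x0 i # u). (x0 i # u)!j = x0 (i+j)"
  proof (intro allI impI)
    fix j assume "j < length (x0 i # u)"
    then show "(x0 i # u)!j = x0 (i+j)" using i by (cases j) auto
  qed
  then show ?thesis using x0(1) unfolding factors_iff by blast
qed

definition FF :: "(nat \<Rightarrow> 'a) set \<Rightarrow> nat \<Rightarrow> 'a list set" where
  "FF L n = {u \<in> factors L. length u = n}"

lemma finite_FF: "finite (FF L n :: 'a::finite list set)"
proof -
  have "FF L n \<subseteq> {xs. set xs \<subseteq> (UNIV::'a set) \<and> length xs = n}" unfolding FF_def by auto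
  then show ?thesis using finite_lists_length_eq[of "UNIV::'a set" n] finite_subset by auto
qed

lemma count_step:
  fixes L :: "(nat \<Rightarrow> 'a::finite) set"
  assumes ms: "minimal_shift L"
  shows "card (FF L n) + card {u. length u = n \<and> left_special L u} \<le> card (FF L (Suc n))"
proof -
  let ?S = "FF L (Suc n)" and ?T = "FF L n"
  define LS where "LS = {u. length u = n \<and> left_special L u}"
  have LST: "LS \<subseteq> ?T" unfolding LS_def FF_def left_special_def by auto
  have im: "tl ` ?S \<subseteq> ?T" unfolding FF_def using tl_factor by auto
  have "card ?S = (\<Sum>w\<in>?S. 1)" by simp
  also have "\<dots> = (\<Sum>u\<in>?T. \<Sum>w\<in>{w. w \<in> ?S \<and> tl w = u}. 1)"
    using sum.group[OF finite_FF finite_FF im, of "\<lambda>_. 1::nat"] by simp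
  also have "\<dots> = (\<Sum>u\<in>?T. card {w. w \<in> ?S \<and> tl w = u})" by simp
  finally have eq: "card ?S = (\<Sum>u\<in>?T. card {w. w \<in> ?S \<and> tl w = u})" .
  have ge: "1 + of_bool (u \<in> LS) \<le> card {w. w \<in> ?S \<and> tl w = u}" if uT: "u \<in> ?T" for u
  proof -
    have fin: "finite {w. w \<in> ?S \<and> tl w = u}" using finite_FF[of L "Suc n"] by simp
    show ?thesis
    proof (cases "u \<in> LS")
      case True
      then obtain a b where "a \<noteq> b" "a # u \<in> factors L" "b # u \<in> factors L"
        unfolding LS_def left_special_def by blast
      then have "{a # u, b # u} \<subseteq> {w. w \<in> ?S \<and> tl w = u}" using uT unfolding FF_def by auto
      then have "card {a # u, b # u} \<le> card {w. w \<in> ?S \<and> tl w = u}" using card_mono fin by blast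
      then show ?thesis using True \<open>a \<noteq> b\<close> by simp
    next
      case False
      obtain a where "a # u \<in> factors L" using left_ext[OF ms] uT unfolding FF_def by blast
      then have "a # u \<in> {w. w \<in> ?S \<and> tl w = u}" using uT unfolding FF_def by auto
      then have "{w. w \<in> ?S \<and> tl w = u} \<noteq> {}" by blast
      then show ?thesis using False fin by (simp add: Suc_leI card_gt_0_iff)
    qed
  qed
  have "(\<Sum>u\<in>?T. 1 + of_bool (u \<in> LS)) \<le> card ?S"
    unfolding eq by (rule sum_mono) (rule ge)
  moreover have "(\<Sum>u\<in>?T. 1 + of_bool (u \<in> LS)) = card ?T + card LS"
  proof -
    have "(\<Sum>u\<in>?T. 1 + of_bool (u \<in> LS)) = (\<Sum>u\<in>?T. (1::nat)) + (\<Sum>u\<in>?T. of_bool (u \<in> LS))"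
      by (rule sum.distrib)
    also have "\<dots> = card ?T + card (?T \<inter> {u. u \<in> LS})"
      using finite_FF[of L n] by (simp only: sum_of_bool_eq card_eq_sum of_nat_id)
    also have "?T \<inter> {u. u \<in> LS} = LS" using LST by blast
    finally show ?thesis .
  qed
  ultimately show ?thesis unfolding LS_def by simp
qed

lemma distinct_prefixes:
  fixes T :: "(nat \<Rightarrow> 'a) set"
  assumes "finite T"
  shows "\<exists>N. \<forall>n\<ge>N. inj_on (\<lambda>x. pref x n) T"
  using assms
proof (induction T rule: finite_induct)
  case empty then show ?case by simp
next
  case (insert a T)
  then obtain N where N: "\<forall>n\<ge>N. inj_on (\<lambda>x. pref x n) T" by blast
  define d where "d y = (SOME i. a i \<noteq> y i)" for y
  have d: "a (d y) \<noteq> y (d y)" if "y \<in> T" for y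
  proof -
    have "a \<noteq> y" using that insert by blast
    then have "\<exists>i. a i \<noteq> y i" by blast
    then show ?thesis unfolding d_def by (rule someI_ex)
  qed
  define N' where "N' = max N (Suc (Max (insert 0 (d ` T))))"
  have "inj_on (\<lambda>x. pref x n) (insert a T)" if "n \<ge> N'" for n
  proof -
    have "pref a n \<noteq> pref y n" if "y \<in> T" for y
    proof
      assume "pref a n = pref y n"
      moreover have "d y < n"
      proof -
        have "d y \<le> Max (insert 0 (d ` T))" using insert(1) that by simp
        then show ?thesis using \<open>n \<ge> N'\<close> unfolding N'_def by simp
      qed
      ultimately have "a (d y) = y (d y)" by (rule pref_eqD)
      with d[OF that] show False by simp
    qed
    moreover have "inj_on (\<lambda>x. pref x n) T" using N that unfolding N'_def by simp
    ultimately show ?thesis unfolding inj_on_def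
      by (intro ballI impI) (auto dest: sym)
  qed
  then show ?case by blast
qed

theorem mainTheorem14:
  fixes L :: "(nat \<Rightarrow> 'a::finite) set"
  assumes "minimal_shift L"
    and "(\<lambda>n. real (complexity L n)) \<in> O(\<lambda>n. real n)"
  shows "finite (SP L)"
proof (rule ccontr)
  assume inf: "infinite (SP L)"
  have cFF: "complexity L n = card (FF L n)" for n unfolding complexity_def FF_def by simp
  from assms(2) obtain c where c: "c > 0" "eventually (\<lambda>n. norm (real (complexity L n)) \<le> c * norm (real n)) at_top"
    by (elim landau_o.bigE)
  then obtain N0 where N0: "\<And>n. n \<ge> N0 \<Longrightarrow> real (card (FF L n)) \<le> c * real n"
    by (auto simp: eventually_at_top_linorder cFF)
  define k where "k = nat (ceiling c) + 1"
  have kc: "real k \<ge> c + 1" unfolding k_def by linarith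
  obtain T where T: "T \<subseteq> SP L" "finite T" "card T = k"
    using infinite_arbitrarily_large[OF inf] by blast
  obtain N where N: "\<forall>n\<ge>N. inj_on (\<lambda>x. pref x n) T" using distinct_prefixes[OF T(2)] by blast
  have step: "card (FF L n) + k \<le> card (FF L (Suc n))" if "n \<ge> N" for n
  proof -
    have "(\<lambda>x. pref x n) ` T \<subseteq> {u. length u = n \<and> left_special L u}"
      using T(1) unfolding SP_def by auto
    moreover have "finite {u. length u = n \<and> left_special L u}"
      by (rule finite_subset[OF _ finite_FF[of L n]]) (auto simp: FF_def left_special_def)
    ultimately have "card ((\<lambda>x. pref x n) ` T) \<le> card {u. length u = n \<and> left_special L u}"
      by (rule card_mono[rotated])
    moreover have "card ((\<lambda>x. pref x n) ` T) = k" using card_image[OF N[rule_format, OF that]] T(3) by simp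
    ultimately show ?thesis using count_step[OF assms(1), of n] by simp
  qed
  have grow: "card (FF L (N + m)) \<ge> k * m" for m
  proof (induction m)
    case 0 then show ?case by simp
  next
    case (Suc m)
    then show ?case using step[of "N + m"] by simp
  qed
  define m where "m = nat (ceiling (c * real (N + N0))) + N0 + 1"
  have mN0: "N + m \<ge> N0" unfolding m_def by simp
  have "real (k * m) \<le> c * real (N + m)"
  proof -
    have "real (k * m) \<le> real (card (FF L (N + m)))" using grow[of m] by (metis of_nat_le_iff)
    also have "\<dots> \<le> c * real (N + m)" using N0[OF mN0] .
    finally show ?thesis .
  qed
  moreover have "real m > c * real (N + N0)" unfolding m_def by linarith
  moreover have "c * real N \<le> c * real (N + N0)" using c(1) by simp
  ultimately have "real k * real m \<le> c * real N + c * real m" by (simp add: distrib_left)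
  moreover have "real k * real m \<ge> (c + 1) * real m" using kc by (simp add: mult_right_mono)
  ultimately show False using \<open>real m > c * real (N + N0)\<close> \<open>c * real N \<le> c * real (N + N0)\<close>
    by (simp add: distrib_right)
qed

end
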